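(* Let $S$ be a pair of pants with boundary components $A_1,A_2,A_3$, let $\pi$ be a convex projective structure on $S$ with monodromy $\rho_\pi\colon \pi_1(S)\to\mathrm{SL}_3(\mathbb{R})$, and let $\lambda_i,\tau_i$ ($i=1,2,3$) be its Goldman boundary parameters and $\tau_{111}(T_\pm)$, $\sigma_1(B_j)$, $\sigma_2(B_j)$ its Fock–Goncharov coordinates (as defined in the context). Then, for $i=1,2,3$ (indices modulo 3), $$\lambda_i=\exp\Big(\tfrac13\sigma_1(B_{i+1})+\tfrac23\sigma_2(B_{i+1})+\tfrac23\sigma_1(B_{i-1})+\tfrac13\sigma_2(B_{i-1})+\tfrac23\tau_{111}(T_+)+\tfrac23\tau_{111}(T_-)\Big)$$ and $$\tau_i=\big(e^{-\sigma_1(B_{i+1})-\sigma_2(B_{i-1})}+1\big)\exp\Big(\tfrac13\sigma_1(B_{i+1})-\tfrac13\sigma_2(B_{i+1})-\tfrac13\sigma_1(B_{i-1})+\tfrac13\sigma_2(B_{i-1})-\tfrac13\tau_{111}(T_+)-\tfrac13\tau_{111}(T_-)\Big).$$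
   Context: $S$ is a compact oriented pair of pants with boundary components $A_1,A_2,A_3$, each oriented opposite to the boundary orientation induced by $S$ (and also regarded as conjugacy classes in $\pi_1(S)$). A convex projective structure $\pi$ on $S$ has a developing map $\widetilde S\to\mathbb{RP}^2$ (a homeomorphism onto a convex domain) equivariant under a monodromy $\rho_\pi\colon\pi_1(S)\to\mathrm{SL}_3(\mathbb{R})$, well defined up to conjugation. For such $\pi$, $\rho_\pi(A_i)$ has distinct positive real eigenvalues $0<\lambda_i<\mu_i<\nu_i$; Goldman's boundary parameters are $\lambda_i$ and $\tau_i=\mu_i+\nu_i$. The unstable flag of $\rho_\pi(A_i)$ is the flag $F^{(1)}\subset F^{(2)}$ where $F^{(1)}$ is the $\lambda_i$-eigenline and $F^{(2)}$ is spanned by the $\lambda_i$- and $\mu_i$-eigenlines. Identify the interior of $S$ with $S^2-\{p_1,p_2,p_3\}$, $p_i$ corresponding to $A_i$, and decompose it into two ideal triangles $T_+,T_-$ glued along three disjoint lines $B_1,B_2,B_3$, where $B_i$ goes (and is oriented) from $p_{i-1}$ to $p_{i+1}$ (indices mod 3), and $p_1,p_2,p_3$ occur in this order clockwise around $T_+$ (counterclockwise around $T_-$). Each vertex of a lift of $T_\pm$ to $\widetilde S$ is fixed by a conjugate $g A_j g^{-1}$ of some $A_j$; assign to it the unstable flag of $\rho_\pi(gA_jg^{-1})$ (equivariantly). For a flag $F$, $f^{(a)}$ denotes any nonzero element of $\Lambda^a F^{(a)}$, and wedges of total degree 3 are identified with real numbers via a fixed volume form. Triangle invariants: if a lift $\widetilde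 T_+$ has vertices with flags $F_1,F_2,F_3$ (vertices fixed by conjugates of $A_1,A_2,A_3$, occurring clockwise in this order), then $\tau_{111}(T_+)=\log\Big(\frac{f_1^{(2)}\wedge f_2^{(1)}}{f_2^{(1)}\wedge f_3^{(2)}}\frac{f_1^{(1)}\wedge f_3^{(2)}}{f_1^{(1)}\wedge f_2^{(2)}}\frac{f_2^{(2)}\wedge f_3^{(1)}}{f_1^{(2)}\wedge f_3^{(1)}}\Big)$; if a lift $\widetilde T_-$ has vertex flags $F'_1,F'_2,F'_3$ (counterclockwise in this order), then $\tau_{111}(T_-)=\log\Big(\frac{f_1'^{(2)}\wedge f_3'^{(1)}}{f_2'^{(2)}\wedge f_3'^{(1)}}\frac{f_1'^{(1)}\wedge f_2'^{(2)}}{f_1'^{(1)}\wedge f_3'^{(2)}}\frac{f_2'^{(1)}\wedge f_3'^{(2)}}{f_1'^{(2)}\wedge f_2'^{(1)}}\Big)$. Shear invariants: lift $B_i$ to $\widetilde B_i$ with adjacent lifts $\widetilde T_+,\widetilde T_-$; let $F_{i+1},F_{i-1}$ be the flags at the positive and negative endpoints of $\widetilde B_i$, $F_i$ the flag at the third vertex of $\widetilde T_+$, and $F_i'$ the flag at the third vertex of $\widetilde T_-$. Then $\sigma_1(B_i)=\log\Big(-\frac{f_{i+1}^{(1)}\wedge f_{i-1}^{(1)}\wedge f_i^{(1)}}{f_{i+1}^{(1)}\wedge f_{i-1}^{(1)}\wedge f_i'^{(1)}}\frac{f_{i-1}^{(2)}\wedge f_i'^{(1)}}{f_{i-1}^{(2)}\wedge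 f_i^{(1)}}\Big)$ and $\sigma_2(B_i)=\log\Big(-\frac{f_{i+1}^{(1)}\wedge f_{i-1}^{(1)}\wedge f_i'^{(1)}}{f_{i+1}^{(1)}\wedge f_{i-1}^{(1)}\wedge f_i^{(1)}}\frac{f_{i+1}^{(2)}\wedge f_i^{(1)}}{f_{i+1}^{(2)}\wedge f_i'^{(1)}}\Big)$. (All quantities inside the logarithms are positive.) *)

theory Defs
  imports "HOL-Analysis.Analysis"
begin

text \<open>Boundary components A_1, A_2, A_3 are indexed by 1, 2, 3; indices are taken modulo 3.\<close>

definition nxt3 :: "nat \<Rightarrow> nat" where
  "nxt3 i = (if i = 3 then 1 else i + 1)"

definition prv3 :: "nat \<Rightarrow> nat" where
  "prv3 i = (if i = 1 then 3 else i - 1)"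

text \<open>Fixed volume form on R^3: the determinant of the matrix with rows a, b, c.
  Wedges of total degree 3 are identified with real numbers through it.\<close>

definition vol3 :: "real^3 \<Rightarrow> real^3 \<Rightarrow> real^3 \<Rightarrow> real" where
  "vol3 a b c = det (vector [a, b, c] :: real^3^3)"

text \<open>A flag F^(1) in F^(2) in R^3 is represented by a pair (u, w) of vectors:
  f^(1) = u spans F^(1), f^(2) = u wedge w spans Lambda^2 F^(2).\<close>

type_synonym flagrep = "(real^3) \<times> (real^3)"

definition w11_1 :: "flagrep \<Rightarrow> flagrep \<Rightarrow> flagrep \<Rightarrow> real" where
  "w11_1 F G H = vol3 (fst F) (fst G) (fst H)"

definition w2_1 :: "flagrep \<Rightarrow> flagrep \<Rightarrow> real" where
  "w2_1 F G = vol3 (fst F) (snd F) (fst G)"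

definition w1_2 :: "flagrep \<Rightarrow> flagrep \<Rightarrow> real" where
  "w1_2 F G = vol3 (fst F) (fst G) (snd G)"

definition unstable_flag_rep :: "real^3^3 \<Rightarrow> real \<Rightarrow> real \<Rightarrow> real \<Rightarrow> flagrep \<Rightarrow> bool" where
  "unstable_flag_rep M lam mu nu F \<longleftrightarrow>
     0 < lam \<and> lam < mu \<and> mu < nu \<and>
     fst F \<noteq> 0 \<and> M *v fst F = lam *\<^sub>R fst F \<and>
     snd F \<noteq> 0 \<and> M *v snd F = mu *\<^sub>R snd F \<and>
     (\<exists>v. v \<noteq> 0 \<and> M *v v = nu *\<^sub>R v)"

definition flag_act :: "real^3^3 \<Rightarrow> flagrep \<Rightarrow> flagrep" where
  "flag_act g F = (g *v fst F, g *v snd F)"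

definition tau111_plus_arg :: "flagrep \<Rightarrow> flagrep \<Rightarrow> flagrep \<Rightarrow> real" where
  "tau111_plus_arg F1 F2 F3 =
     (w2_1 F1 F2 / w1_2 F2 F3) * (w1_2 F1 F3 / w1_2 F1 F2) * (w2_1 F2 F3 / w2_1 F1 F3)"

definition tau111_minus_arg :: "flagrep \<Rightarrow> flagrep \<Rightarrow> flagrep \<Rightarrow> real" where
  "tau111_minus_arg F1 F2 F3 =
     (w2_1 F1 F3 / w2_1 F2 F3) * (w1_2 F1 F2 / w1_2 F1 F3) * (w1_2 F2 F3 / w2_1 F1 F2)"

text \<open>Shear arguments: Fp, Fn flags at the positive/negative endpoints of the edge,
  F at the third vertex of the T_+ lift, F' at the third vertex of the T_- lift.\<close>

definition sigma1_arg :: "flagrep \<Rightarrow> flagrep \<Rightarrow> flagrep \<Rightarrow> flagrep \<Rightarrow> real" where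
  "sigma1_arg Fp Fn F F' =
     - (w11_1 Fp Fn F / w11_1 Fp Fn F') * (w2_1 Fn F' / w2_1 Fn F)"

definition sigma2_arg :: "flagrep \<Rightarrow> flagrep \<Rightarrow> flagrep \<Rightarrow> flagrep \<Rightarrow> real" where
  "sigma2_arg Fp Fn F F' =
     - (w11_1 Fp Fn F' / w11_1 Fp Fn F) * (w2_1 Fp F / w2_1 Fp F')"

text \<open>M i = rho(A_i); the lift of T_+ has vertices fixed
  by A_1, A_2, A_3 with flags F i; the lift of T_- adjacent to it along the lift of B_i
  has third vertex M (nxt3 i) applied to the vertex of F i, with flag F' i.\<close>

definition Fp_flag :: "(nat \<Rightarrow> real^3^3) \<Rightarrow> (nat \<Rightarrow> flagrep) \<Rightarrow> nat \<Rightarrow> flagrep" where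
  "Fp_flag M F i = flag_act (M (nxt3 i)) (F i)"

definition tau111_Tplus :: "(nat \<Rightarrow> real^3^3) \<Rightarrow> (nat \<Rightarrow> flagrep) \<Rightarrow> real" where
  "tau111_Tplus M F = ln (tau111_plus_arg (F 1) (F 2) (F 3))"

definition tau111_Tminus :: "(nat \<Rightarrow> real^3^3) \<Rightarrow> (nat \<Rightarrow> flagrep) \<Rightarrow> real" where
  "tau111_Tminus M F = ln (tau111_minus_arg (Fp_flag M F 1) (F 2) (F 3))"

definition sigma1_B :: "(nat \<Rightarrow> real^3^3) \<Rightarrow> (nat \<Rightarrow> flagrep) \<Rightarrow> nat \<Rightarrow> real" where
  "sigma1_B M F i = ln (sigma1_arg (F (nxt3 i)) (F (prv3 i)) (F i) (Fp_flag M F i))"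

definition sigma2_B :: "(nat \<Rightarrow> real^3^3) \<Rightarrow> (nat \<Rightarrow> flagrep) \<Rightarrow> nat \<Rightarrow> real" where
  "sigma2_B M F i = ln (sigma2_arg (F (nxt3 i)) (F (prv3 i)) (F i) (Fp_flag M F i))"

text \<open>The arguments of all logarithms are positive (as holds for monodromies of convex
  projective structures).\<close>

definition FG_positive :: "(nat \<Rightarrow> real^3^3) \<Rightarrow> (nat \<Rightarrow> flagrep) \<Rightarrow> bool" where
  "FG_positive M F \<longleftrightarrow>
     0 < tau111_plus_arg (F 1) (F 2) (F 3) \<and>
     0 < tau111_minus_arg (Fp_flag M F 1) (F 2) (F 3) \<and>
     (\<forall>i\<in>{1,2,3}. 0 < sigma1_arg (F (nxt3 i)) (F (prv3 i)) (F i) (Fp_flag M F i) \<and>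
                   0 < sigma2_arg (F (nxt3 i)) (F (prv3 i)) (F i) (Fp_flag M F i))"

end

theory Submission
  imports Defs
begin


lemma vol3_explicit:
  "vol3 a b c = a$1*b$2*c$3 - a$1*b$3*c$2 - a$2*b$1*c$3 + a$2*b$3*c$1 + a$3*b$1*c$2 - a$3*b$2*c$1"
  unfolding vol3_def det_3 by (simp add: algebra_simps)

lemma vol3_cyc: "vol3 a b c = vol3 b c a"
  unfolding vol3_explicit by (simp add: algebra_simps)

lemma vol3_scale1: "vol3 (r *\<^sub>R a) b c = r * vol3 a b c"
  unfolding vol3_explicit by (simp add: algebra_simps)
lemma vol3_scale2: "vol3 a (r *\<^sub>R b) c = r * vol3 a b c"
  unfolding vol3_explicit by (simp add: algebra_simps)
lemma vol3_scale3: "vol3 a b (r *\<^sub>R c) = r * vol3 a b c"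
  unfolding vol3_explicit by (simp add: algebra_simps)

lemma rows_eq: "(vector [g *v a, g *v b, g *v c] :: real^3^3) = vector [a,b,c] ** transpose g"
  unfolding vec_eq_iff forall_3 matrix_matrix_mult_def matrix_vector_mult_def transpose_def
  by (simp add: sum_3 mult.commute)

lemma vol3_act: "vol3 (g *v a) (g *v b) (g *v c) = det g * vol3 a b c"
  unfolding vol3_def rows_eq det_mul det_transpose by simp



lemma vol3_add1: "vol3 (x + y) b c = vol3 x b c + vol3 y b c"
  unfolding vol3_explicit by (simp add: algebra_simps)
lemma vol3_add2: "vol3 a (x + y) c = vol3 a x c + vol3 a y c"
  unfolding vol3_explicit by (simp add: algebra_simps)
lemma vol3_rep12: "vol3 a a c = 0" unfolding vol3_explicit by (simp add: algebra_simps)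
lemma vol3_rep13: "vol3 a b a = 0" unfolding vol3_explicit by (simp add: algebra_simps)
lemma vol3_rep23: "vol3 a b b = 0" unfolding vol3_explicit by (simp add: algebra_simps)

lemma cramer: "vol3 a b c *\<^sub>R v = vol3 v b c *\<^sub>R a + vol3 a v c *\<^sub>R b + vol3 a b v *\<^sub>R c"
  unfolding vec_eq_iff forall_3 vol3_explicit by (simp add: algebra_simps)

lemma eig_prod:
  assumes dM: "det M = 1" and eu: "M *v u = l *\<^sub>R u" and ew: "M *v w = m *\<^sub>R w"
    and ev: "M *v v = n *\<^sub>R v" and v0: "v \<noteq> 0" and ln: "l \<noteq> n" and mn: "m \<noteq> n"
    and z: "vol3 u w z \<noteq> 0"
  shows "l * m * n = 1"
proof -
  have D: "vol3 u w v \<noteq> 0"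
  proof
    assume D0: "vol3 u w v = 0"
    define \<alpha> where "\<alpha> = vol3 v w z"
    define \<beta> where "\<beta> = vol3 u v z"
    define \<gamma> where "\<gamma> = vol3 u w z"
    have E1: "\<gamma> *\<^sub>R v = \<alpha> *\<^sub>R u + \<beta> *\<^sub>R w"
      using cramer[of u w z v] D0 unfolding \<alpha>_def \<beta>_def \<gamma>_def by simp
    have "M *v (\<gamma> *\<^sub>R v) = M *v (\<alpha> *\<^sub>R u + \<beta> *\<^sub>R w)" using E1 by simp
    hence E2: "(\<gamma> * n) *\<^sub>R v = (\<alpha> * l) *\<^sub>R u + (\<beta> * m) *\<^sub>R w"
      by (simp add: matrix_vector_right_distrib matrix_vector_mult_scaleR eu ew ev)
    have E3: "(\<gamma> * n) *\<^sub>R v = (\<alpha> * n) *\<^sub>R u + (\<beta> * n) *\<^sub>R w"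
      using arg_cong[OF E1, of "\<lambda>x. n *\<^sub>R x"] by (simp add: algebra_simps)
    have E4: "(\<alpha> * l) *\<^sub>R u + (\<beta> * m) *\<^sub>R w = (\<alpha> * n) *\<^sub>R u + (\<beta> * n) *\<^sub>R w"
      using E2 E3 by simp
    have "vol3 ((\<alpha> * l) *\<^sub>R u + (\<beta> * m) *\<^sub>R w) w z = vol3 ((\<alpha> * n) *\<^sub>R u + (\<beta> * n) *\<^sub>R w) w z"
      using E4 by simp
    hence "\<alpha> * l * \<gamma> = \<alpha> * n * \<gamma>"
      by (simp add: vol3_add1 vol3_scale1 vol3_rep12 \<gamma>_def)
    hence a0: "\<alpha> = 0" using ln z \<gamma>_def by simp
    have "vol3 u ((\<alpha> * l) *\<^sub>R u + (\<beta> * m) *\<^sub>R w) z = vol3 u ((\<alpha> * n) *\<^sub>R u + (\<beta> * n) *\<^sub>R w) z"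
      using E4 by simp
    hence "\<beta> * m * \<gamma> = \<beta> * n * \<gamma>"
      by (simp add: vol3_add2 vol3_scale2 vol3_rep12 \<gamma>_def)
    hence b0: "\<beta> = 0" using mn z \<gamma>_def by simp
    have "\<gamma> *\<^sub>R v = 0" using E1 a0 b0 by simp
    thus False using z v0 \<gamma>_def by simp
  qed
  have "vol3 (M *v u) (M *v w) (M *v v) = vol3 u w v" using vol3_act[of M u w v] dM by simp
  hence "l * m * n * vol3 u w v = vol3 u w v"
    by (simp add: eu ew ev vol3_scale1 vol3_scale2 vol3_scale3 ac_simps)
  thus ?thesis using D by (metis mult_cancel_right2)
qed

lemma core:
  fixes A B C :: "real^3^3" and X Y Z :: flagrep
  assumes dA: "det A = 1" and BAC: "B ** A ** C = mat 1"
    and eu: "A *v fst X = l *\<^sub>R fst X" and ew: "A *v snd X = m *\<^sub>R snd X"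
    and lpos: "l > 0" and mpos: "m > 0" and lmn: "l * m * n = 1"
    and ey: "B *v fst Y = lY *\<^sub>R fst Y" and lYpos: "lY > 0"
    and p1: "0 < sigma1_arg Z X Y (flag_act C Y)" and p2: "0 < sigma2_arg Z X Y (flag_act C Y)"
    and p3: "0 < sigma1_arg X Y Z (flag_act A Z)" and p4: "0 < sigma2_arg X Y Z (flag_act A Z)"
    and p5: "0 < tau111_plus_arg X Y Z" and p6: "0 < tau111_minus_arg X Y (flag_act A Z)"
  shows "sigma1_arg Z X Y (flag_act C Y) * sigma2_arg X Y Z (flag_act A Z) = m / n"
    and "sigma2_arg Z X Y (flag_act C Y) * sigma1_arg X Y Z (flag_act A Z)
         * tau111_plus_arg X Y Z * tau111_minus_arg X Y (flag_act A Z) = l^2 * n"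
proof -
  obtain u w where X: "X = (u, w)" by (cases X)
  obtain y y2 where Y: "Y = (y, y2)" by (cases Y)
  obtain z z2 where Z: "Z = (z, z2)" by (cases Z)
  have eu': "A *v u = l *\<^sub>R u" and ew': "A *v w = m *\<^sub>R w" and ey': "B *v y = lY *\<^sub>R y"
    using eu ew ey X Y by auto
  have "B ** (A ** C) = mat 1" using BAC by (simp add: matrix_mul_assoc)
  hence "(A ** C) ** B = mat 1" using matrix_left_right_inverse by blast
  hence "((A ** C) ** B) *v y = y" by (simp add: matrix_vector_mul_lid)
  hence "A *v (C *v (B *v y)) = y" by (metis matrix_vector_mul_assoc)
  hence "lY *\<^sub>R (A *v (C *v y)) = y" using ey' by (simp add: matrix_vector_mult_scaleR)
  hence "(1/lY) *\<^sub>R (lY *\<^sub>R (A *v (C *v y))) = (1/lY) *\<^sub>R y" by simp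
  hence Aq: "A *v (C *v y) = (1/lY) *\<^sub>R y" using lYpos by simp
  have R1: "vol3 z u (C *v y) = (l/lY) * vol3 (A *v z) u y"
    using vol3_act[of A z u "C *v y"] dA by (simp add: eu' Aq vol3_scale2 vol3_scale3)
  have R2: "vol3 u w (C *v y) = (l*m/lY) * vol3 u w y"
    using vol3_act[of A u w "C *v y"] dA by (simp add: eu' ew' Aq vol3_scale1 vol3_scale2 vol3_scale3 ac_simps)
  have R3: "vol3 z z2 (C *v y) = (1/lY) * vol3 (A *v z) (A *v z2) y"
    using vol3_act[of A z z2 "C *v y"] dA by (simp add: Aq vol3_scale3)
  have "l * m * vol3 u w (A *v z) = vol3 u w z"
    using vol3_act[of A u w z] dA by (simp add: eu' ew' vol3_scale1 vol3_scale2 ac_simps)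
  hence R4: "vol3 u w (A *v z) = n * vol3 u w z"
    using lmn by (metis mult.assoc mult.commute mult_1)
  have "l * vol3 u (A *v z) (A *v z2) = vol3 u z z2"
    using vol3_act[of A u z z2] dA by (simp add: eu' vol3_scale1 ac_simps)
  hence R5: "vol3 u (A *v z) (A *v z2) = (1/l) * vol3 u z z2"
    using lpos by (simp add: field_simps)
  have C1: "vol3 z u y = vol3 u y z" and C2: "vol3 (A *v z) u y = vol3 u y (A *v z)"
    and C3: "vol3 y z z2 = vol3 z z2 y" and C4: "vol3 y (A *v z) (A *v z2) = vol3 (A *v z) (A *v z2) y"
    using vol3_cyc by metis+
  note defs = sigma1_arg_def sigma2_arg_def tau111_plus_arg_def tau111_minus_arg_def
    w11_1_def w2_1_def w1_2_def flag_act_def X Y Z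
  note rw = R1 R2 R3 R4 R5 C1 C2 C3 C4
  have e1: "sigma1_arg Z X Y (flag_act C Y) = 
     - (vol3 u y z / ((l/lY) * vol3 u y (A *v z))) * (((l*m/lY) * vol3 u w y) / vol3 u w y)"
    unfolding defs by (simp add: rw)
  have e2: "sigma2_arg Z X Y (flag_act C Y) = 
     - (((l/lY) * vol3 u y (A *v z)) / vol3 u y z) * (vol3 z z2 y / ((1/lY) * vol3 (A *v z) (A *v z2) y))"
    unfolding defs by (simp add: rw)
  have e3: "sigma1_arg X Y Z (flag_act A Z) = 
     - (vol3 u y z / vol3 u y (A *v z)) * (vol3 y y2 (A *v z) / vol3 y y2 z)"
    unfolding defs by (simp add: rw)
  have e4: "sigma2_arg X Y Z (flag_act A Z) = 
     - (vol3 u y (A *v z) / vol3 u y z) * (vol3 u w z / (n * vol3 u w z))"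
    unfolding defs by (simp add: rw)
  have e5: "tau111_plus_arg X Y Z = 
     (vol3 u w y / vol3 z z2 y) * (vol3 u z z2 / vol3 u y y2) * (vol3 y y2 z / vol3 u w z)"
    unfolding defs by (simp add: rw)
  have e6: "tau111_minus_arg X Y (flag_act A Z) = 
     (n * vol3 u w z / vol3 y y2 (A *v z)) * (vol3 u y y2 / ((1/l) * vol3 u z z2))
       * (vol3 (A *v z) (A *v z2) y / vol3 u w y)"
    unfolding defs by (simp add: rw)
  have nz: "vol3 u y z \<noteq> 0" "vol3 u y (A *v z) \<noteq> 0" "vol3 u w y \<noteq> 0" "vol3 z z2 y \<noteq> 0"
     "vol3 (A *v z) (A *v z2) y \<noteq> 0" "vol3 y y2 (A *v z) \<noteq> 0" "vol3 y y2 z \<noteq> 0"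
     "vol3 u w z \<noteq> 0" "vol3 u z z2 \<noteq> 0" "vol3 u y y2 \<noteq> 0" "n \<noteq> 0"
    using p1 p2 p3 p4 p5 p6 unfolding e1 e2 e3 e4 e5 e6 by (auto simp: divide_eq_0_iff)
  show "sigma1_arg Z X Y (flag_act C Y) * sigma2_arg X Y Z (flag_act A Z) = m / n"
    unfolding e1 e4 using nz lpos lYpos by (simp add: field_simps)
  show "sigma2_arg Z X Y (flag_act C Y) * sigma1_arg X Y Z (flag_act A Z)
         * tau111_plus_arg X Y Z * tau111_minus_arg X Y (flag_act A Z) = l^2 * n"
    unfolding e2 e3 e5 e6 using nz lpos lYpos by (simp add: field_simps power2_eq_square)
qed



lemma tp_cyc: "tau111_plus_arg F G H = tau111_plus_arg G H F"
  unfolding tau111_plus_arg_def w2_1_def w1_2_def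
  using vol3_cyc by (metis (no_types, lifting) mult.commute mult.left_commute times_divide_times_eq)

lemma tm_cyc: "tau111_minus_arg F G H = tau111_minus_arg G H F"
  unfolding tau111_minus_arg_def w2_1_def w1_2_def
  using vol3_cyc by (metis (no_types, lifting) mult.commute mult.left_commute times_divide_times_eq)

lemma tm_act: "det g = 1 \<Longrightarrow>
  tau111_minus_arg (flag_act g F) (flag_act g G) (flag_act g H) = tau111_minus_arg F G H"
  unfolding tau111_minus_arg_def w2_1_def w1_2_def flag_act_def by (simp add: vol3_act)

lemma tm_scale:
  assumes "a1 \<noteq> 0" "b1 \<noteq> 0" "a2 \<noteq> 0" "b2 \<noteq> 0" "a3 \<noteq> 0" "b3 \<noteq> 0"
  shows "tau111_minus_arg (a1 *\<^sub>R fst F, b1 *\<^sub>R snd F) (a2 *\<^sub>R fst G, b2 *\<^sub>R snd G)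
           (a3 *\<^sub>R fst H, b3 *\<^sub>R snd H) = tau111_minus_arg F G H"
  unfolding tau111_minus_arg_def w2_1_def w1_2_def
  using assms by (simp add: vol3_scale1 vol3_scale2 vol3_scale3 field_simps)



lemma final_log:
  fixes l m n s1a s2a s1b s2b t tm :: real
  assumes lpos: "l > 0" and mpos: "m > 0" and npos: "n > 0" and lmn: "l * m * n = 1"
    and ps: "s1a > 0" "s2a > 0" "s1b > 0" "s2b > 0" "t > 0" "tm > 0"
    and K1: "s1a * s2b = m / n" and K2: "s2a * s1b * t * tm = l^2 * n"
  shows "l = exp (ln s1a / 3 + 2/3 * ln s2a + 2/3 * ln s1b + ln s2b / 3 + 2/3 * ln t + 2/3 * ln tm)
     \<and> m + n = (exp (- ln s1a - ln s2b) + 1)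
         * exp (ln s1a / 3 - ln s2a / 3 - ln s1b / 3 + ln s2b / 3 - ln t / 3 - ln tm / 3)"
proof -
  have L1: "ln s1a + ln s2b = ln m - ln n"
    using arg_cong[OF K1, of ln] ps mpos npos by (simp add: ln_mult ln_div)
  have L2: "ln s2a + ln s1b + ln t + ln tm = 2 * ln l + ln n"
    using arg_cong[OF K2, of ln] ps lpos npos by (simp add: ln_mult ln_realpow)
  have L3: "ln l + ln m + ln n = 0"
    using arg_cong[OF lmn, of ln] lpos mpos npos by (simp add: ln_mult)
  have e1: "ln s1a / 3 + 2/3 * ln s2a + 2/3 * ln s1b + ln s2b / 3 + 2/3 * ln t + 2/3 * ln tm = ln l"
    using L1 L2 L3 by linarith
  have e2: "ln s1a / 3 - ln s2a / 3 - ln s1b / 3 + ln s2b / 3 - ln t / 3 - ln tm / 3 = ln m"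
    using L1 L2 L3 by linarith
  have e3: "- ln s1a - ln s2b = ln (n / m)" using L1 mpos npos by (simp add: ln_div)
  show ?thesis unfolding e1 e2 e3 using lpos mpos npos by (simp add: field_simps)
qed

lemma frame:
  fixes A B C :: "real^3^3" and X Y Z :: flagrep
  assumes dA: "det A = 1" and BAC: "B ** A ** C = mat 1"
    and fl: "unstable_flag_rep A l m n X"
    and ey: "B *v fst Y = lY *\<^sub>R fst Y" and lYpos: "lY > 0"
    and p1: "0 < sigma1_arg Z X Y (flag_act C Y)" and p2: "0 < sigma2_arg Z X Y (flag_act C Y)"
    and p3: "0 < sigma1_arg X Y Z (flag_act A Z)" and p4: "0 < sigma2_arg X Y Z (flag_act A Z)"
    and p5: "0 < tau111_plus_arg X Y Z" and p6: "0 < tau111_minus_arg X Y (flag_act A Z)"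
  shows "l = exp (ln (sigma1_arg Z X Y (flag_act C Y)) / 3 + 2/3 * ln (sigma2_arg Z X Y (flag_act C Y))
           + 2/3 * ln (sigma1_arg X Y Z (flag_act A Z)) + ln (sigma2_arg X Y Z (flag_act A Z)) / 3
           + 2/3 * ln (tau111_plus_arg X Y Z) + 2/3 * ln (tau111_minus_arg X Y (flag_act A Z)))
     \<and> m + n = (exp (- ln (sigma1_arg Z X Y (flag_act C Y)) - ln (sigma2_arg X Y Z (flag_act A Z))) + 1)
         * exp (ln (sigma1_arg Z X Y (flag_act C Y)) / 3 - ln (sigma2_arg Z X Y (flag_act C Y)) / 3
            - ln (sigma1_arg X Y Z (flag_act A Z)) / 3 + ln (sigma2_arg X Y Z (flag_act A Z)) / 3
            - ln (tau111_plus_arg X Y Z) / 3 - ln (tau111_minus_arg X Y (flag_act A Z)) / 3)"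
proof -
  obtain v where v: "v \<noteq> 0" "A *v v = n *\<^sub>R v" and lm: "0 < l" "l < m" "m < n"
    and eu: "A *v fst X = l *\<^sub>R fst X" and ew: "A *v snd X = m *\<^sub>R snd X"
    using fl unfolding unstable_flag_rep_def by blast
  have "w2_1 X Y \<noteq> 0" using p5 unfolding tau111_plus_arg_def by auto
  hence z: "vol3 (fst X) (snd X) (fst Y) \<noteq> 0" unfolding w2_1_def .
  have lmn: "l * m * n = 1"
    using eig_prod[OF dA eu ew v(2) v(1) _ _ z] lm by simp
  note K = core[OF dA BAC eu ew _ _ lmn ey lYpos p1 p2 p3 p4 p5 p6]
  show ?thesis
    using final_log[OF _ _ _ lmn p1 p2 p3 p4 p5 p6] K lm by simp
qed



lemma inv_app: "P ** Q = mat 1 \<Longrightarrow> P *v (Q *v x) = (x :: real^3)"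
  by (metis matrix_vector_mul_assoc matrix_vector_mul_lid)

theorem proposition1:
  fixes M :: "nat \<Rightarrow> real^3^3"
    and F :: "nat \<Rightarrow> flagrep"
    and lam mu nu :: "nat \<Rightarrow> real"
  assumes SL3: "\<And>i. i \<in> {1,2,3} \<Longrightarrow> det (M i) = 1"
    and rel: "M 3 ** M 2 ** M 1 = mat 1"
    and flags: "\<And>i. i \<in> {1,2,3} \<Longrightarrow> unstable_flag_rep (M i) (lam i) (mu i) (nu i) (F i)"
    and pos: "FG_positive M F"
    and i: "i \<in> {1,2,3}"
  shows "(lam i = exp (sigma1_B M F (nxt3 i) / 3 + 2/3 * sigma2_B M F (nxt3 i)
                     + 2/3 * sigma1_B M F (prv3 i) + sigma2_B M F (prv3 i) / 3
                     + 2/3 * tau111_Tplus M F + 2/3 * tau111_Tminus M F))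
         \<and> (mu i + nu i = (exp (- sigma1_B M F (nxt3 i) - sigma2_B M F (prv3 i)) + 1)
                     * exp (sigma1_B M F (nxt3 i) / 3 - sigma2_B M F (nxt3 i) / 3
                            - sigma1_B M F (prv3 i) / 3 + sigma2_B M F (prv3 i) / 3
                            - tau111_Tplus M F / 3 - tau111_Tminus M F / 3))"
proof -
  have fl1: "unstable_flag_rep (M 1) (lam 1) (mu 1) (nu 1) (F 1)" using flags by simp
  have fl2: "unstable_flag_rep (M 2) (lam 2) (mu 2) (nu 2) (F 2)" using flags by simp
  have fl3: "unstable_flag_rep (M 3) (lam 3) (mu 3) (nu 3) (F 3)" using flags by simp
  have d1: "det (M 1) = 1" and d2: "det (M 2) = 1" and d3: "det (M 3) = 1" using SL3 by auto
  have e1: "M 1 *v fst (F 1) = lam 1 *\<^sub>R fst (F 1)" "M 1 *v snd (F 1) = mu 1 *\<^sub>R snd (F 1)"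
    "lam 1 > 0" "mu 1 > 0" using fl1 unfolding unstable_flag_rep_def by auto
  have e2: "M 2 *v fst (F 2) = lam 2 *\<^sub>R fst (F 2)" "M 2 *v snd (F 2) = mu 2 *\<^sub>R snd (F 2)"
    "lam 2 > 0" "mu 2 > 0" using fl2 unfolding unstable_flag_rep_def by auto
  have e3: "M 3 *v fst (F 3) = lam 3 *\<^sub>R fst (F 3)" "M 3 *v snd (F 3) = mu 3 *\<^sub>R snd (F 3)"
    "lam 3 > 0" "mu 3 > 0" using fl3 unfolding unstable_flag_rep_def by auto
  have r321: "M 3 ** (M 2 ** M 1) = mat 1" using rel by (simp add: matrix_mul_assoc)
  have r213: "M 2 ** M 1 ** M 3 = mat 1" using r321 matrix_left_right_inverse by blast
  have "M 1 ** (M 3 ** M 2) = mat 1" using rel matrix_left_right_inverse by blast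
  hence r132: "M 1 ** M 3 ** M 2 = mat 1" by (simp add: matrix_mul_assoc)
  have n: "nxt3 1 = 2" "nxt3 2 = 3" "nxt3 3 = 1" "prv3 1 = 3" "prv3 2 = 1" "prv3 3 = 2"
    unfolding nxt3_def prv3_def by simp_all
  have P: "0 < tau111_plus_arg (F 1) (F 2) (F 3)"
     "0 < tau111_minus_arg (flag_act (M 2) (F 1)) (F 2) (F 3)"
     "0 < sigma1_arg (F 2) (F 3) (F 1) (flag_act (M 2) (F 1))"
     "0 < sigma2_arg (F 2) (F 3) (F 1) (flag_act (M 2) (F 1))"
     "0 < sigma1_arg (F 3) (F 1) (F 2) (flag_act (M 3) (F 2))"
     "0 < sigma2_arg (F 3) (F 1) (F 2) (flag_act (M 3) (F 2))"
     "0 < sigma1_arg (F 1) (F 2) (F 3) (flag_act (M 1) (F 3))"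
     "0 < sigma2_arg (F 1) (F 2) (F 3) (flag_act (M 1) (F 3))"
  proof -
    have B: "\<forall>i\<in>{1,2,3}. 0 < sigma1_arg (F (nxt3 i)) (F (prv3 i)) (F i) (Fp_flag M F i) \<and>
                   0 < sigma2_arg (F (nxt3 i)) (F (prv3 i)) (F i) (Fp_flag M F i)"
      and T: "0 < tau111_plus_arg (F 1) (F 2) (F 3)" "0 < tau111_minus_arg (Fp_flag M F 1) (F 2) (F 3)"
      using pos unfolding FG_positive_def by auto
    have b1: "0 < sigma1_arg (F (nxt3 1)) (F (prv3 1)) (F 1) (Fp_flag M F 1) \<and>
                   0 < sigma2_arg (F (nxt3 1)) (F (prv3 1)) (F 1) (Fp_flag M F 1)"
      using B by blast
    have b2: "0 < sigma1_arg (F (nxt3 2)) (F (prv3 2)) (F 2) (Fp_flag M F 2) \<and>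
                   0 < sigma2_arg (F (nxt3 2)) (F (prv3 2)) (F 2) (Fp_flag M F 2)"
      using B by blast
    have b3: "0 < sigma1_arg (F (nxt3 3)) (F (prv3 3)) (F 3) (Fp_flag M F 3) \<and>
                   0 < sigma2_arg (F (nxt3 3)) (F (prv3 3)) (F 3) (Fp_flag M F 3)"
      using B by blast
    show "0 < tau111_plus_arg (F 1) (F 2) (F 3)"
     "0 < tau111_minus_arg (flag_act (M 2) (F 1)) (F 2) (F 3)"
     "0 < sigma1_arg (F 2) (F 3) (F 1) (flag_act (M 2) (F 1))"
     "0 < sigma2_arg (F 2) (F 3) (F 1) (flag_act (M 2) (F 1))"
     "0 < sigma1_arg (F 3) (F 1) (F 2) (flag_act (M 3) (F 2))"
     "0 < sigma2_arg (F 3) (F 1) (F 2) (flag_act (M 3) (F 2))"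
     "0 < sigma1_arg (F 1) (F 2) (F 3) (flag_act (M 1) (F 3))"
     "0 < sigma2_arg (F 1) (F 2) (F 3) (flag_act (M 1) (F 3))"
      using T b1 b2 b3 unfolding Fp_flag_def n by simp_all
  qed
  note unf = sigma1_B_def sigma2_B_def tau111_Tplus_def tau111_Tminus_def Fp_flag_def
  have M21_3: "M 2 *v (M 1 *v x) = (1 / lam 3) *\<^sub>R x" if "M 3 *v x = lam 3 *\<^sub>R x" for x
  proof -
    have "(M 2 ** M 1) *v (M 3 *v x) = x" by (rule inv_app[OF r213])
    hence "M 2 *v (M 1 *v (M 3 *v x)) = x" by (simp only: matrix_vector_mul_assoc[of "M 2" "M 1"])
    hence "M 2 *v (M 1 *v (lam 3 *\<^sub>R x)) = x" by (simp only: that)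
    hence "lam 3 *\<^sub>R (M 2 *v (M 1 *v x)) = x" by (simp only: matrix_vector_mult_scaleR)
    hence "(1 / lam 3) *\<^sub>R (lam 3 *\<^sub>R (M 2 *v (M 1 *v x))) = (1 / lam 3) *\<^sub>R x" by simp
    thus ?thesis using e3(3) by simp
  qed
  have M21_3': "M 2 *v (M 1 *v x) = (1 / mu 3) *\<^sub>R x" if "M 3 *v x = mu 3 *\<^sub>R x" for x
  proof -
    have "(M 2 ** M 1) *v (M 3 *v x) = x" by (rule inv_app[OF r213])
    hence "M 2 *v (M 1 *v (M 3 *v x)) = x" by (simp only: matrix_vector_mul_assoc[of "M 2" "M 1"])
    hence "M 2 *v (M 1 *v (mu 3 *\<^sub>R x)) = x" by (simp only: that)
    hence "mu 3 *\<^sub>R (M 2 *v (M 1 *v x)) = x" by (simp only: matrix_vector_mult_scaleR)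
    hence "(1 / mu 3) *\<^sub>R (mu 3 *\<^sub>R (M 2 *v (M 1 *v x))) = (1 / mu 3) *\<^sub>R x" by simp
    thus ?thesis using e3(4) by simp
  qed
  have dets21: "det (M 2 ** M 1) = 1" using d1 d2 by (simp add: det_mul)
  consider "i = 1" | "i = 2" | "i = 3" using i by auto
  then show ?thesis
  proof cases
    case 1
    have Tm: "tau111_minus_arg (flag_act (M 2) (F 1)) (F 2) (F 3)
        = tau111_minus_arg (F 1) (F 2) (flag_act (M 1) (F 3))"
    proof -
      have "tau111_minus_arg (F 1) (F 2) (flag_act (M 1) (F 3))
          = tau111_minus_arg (flag_act (M 2) (F 1)) (flag_act (M 2) (F 2)) (flag_act (M 2) (flag_act (M 1) (F 3)))"
        using tm_act[OF d2] by simp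
      also have "\<dots> = tau111_minus_arg (1 *\<^sub>R fst (flag_act (M 2) (F 1)), 1 *\<^sub>R snd (flag_act (M 2) (F 1)))
          (lam 2 *\<^sub>R fst (F 2), mu 2 *\<^sub>R snd (F 2)) ((1 / lam 3) *\<^sub>R fst (F 3), (1 / mu 3) *\<^sub>R snd (F 3))"
        unfolding flag_act_def using e2 M21_3[OF e3(1)] M21_3'[OF e3(2)] by simp
      also have "\<dots> = tau111_minus_arg (flag_act (M 2) (F 1)) (F 2) (F 3)"
        by (rule tm_scale) (use e2 e3 in auto)
      finally show ?thesis by simp
    qed
    have "lam 1 = exp (ln (sigma1_arg (F 3) (F 1) (F 2) (flag_act (M 3) (F 2))) / 3 + 2/3 * ln (sigma2_arg (F 3) (F 1) (F 2) (flag_act (M 3) (F 2)))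
           + 2/3 * ln (sigma1_arg (F 1) (F 2) (F 3) (flag_act (M 1) (F 3))) + ln (sigma2_arg (F 1) (F 2) (F 3) (flag_act (M 1) (F 3))) / 3
           + 2/3 * ln (tau111_plus_arg (F 1) (F 2) (F 3)) + 2/3 * ln (tau111_minus_arg (F 1) (F 2) (flag_act (M 1) (F 3))))
     \<and> mu 1 + nu 1 = (exp (- ln (sigma1_arg (F 3) (F 1) (F 2) (flag_act (M 3) (F 2))) - ln (sigma2_arg (F 1) (F 2) (F 3) (flag_act (M 1) (F 3)))) + 1)
         * exp (ln (sigma1_arg (F 3) (F 1) (F 2) (flag_act (M 3) (F 2))) / 3 - ln (sigma2_arg (F 3) (F 1) (F 2) (flag_act (M 3) (F 2))) / 3
            - ln (sigma1_arg (F 1) (F 2) (F 3) (flag_act (M 1) (F 3))) / 3 + ln (sigma2_arg (F 1) (F 2) (F 3) (flag_act (M 1) (F 3))) / 3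
            - ln (tau111_plus_arg (F 1) (F 2) (F 3)) / 3 - ln (tau111_minus_arg (F 1) (F 2) (flag_act (M 1) (F 3))) / 3)"
      by (rule frame[OF d1 r213 fl1 e2(1) e2(3)]) (use P Tm in auto)
    then show ?thesis unfolding unf using 1 Tm n by simp
  next
    case 2
    have Tm: "tau111_minus_arg (flag_act (M 2) (F 1)) (F 2) (F 3)
        = tau111_minus_arg (F 2) (F 3) (flag_act (M 2) (F 1))" by (rule tm_cyc)
    have Tp: "tau111_plus_arg (F 1) (F 2) (F 3) = tau111_plus_arg (F 2) (F 3) (F 1)" by (rule tp_cyc)
    have "lam 2 = exp (ln (sigma1_arg (F 1) (F 2) (F 3) (flag_act (M 1) (F 3))) / 3 + 2/3 * ln (sigma2_arg (F 1) (F 2) (F 3) (flag_act (M 1) (F 3)))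
           + 2/3 * ln (sigma1_arg (F 2) (F 3) (F 1) (flag_act (M 2) (F 1))) + ln (sigma2_arg (F 2) (F 3) (F 1) (flag_act (M 2) (F 1))) / 3
           + 2/3 * ln (tau111_plus_arg (F 2) (F 3) (F 1)) + 2/3 * ln (tau111_minus_arg (F 2) (F 3) (flag_act (M 2) (F 1))))
     \<and> mu 2 + nu 2 = (exp (- ln (sigma1_arg (F 1) (F 2) (F 3) (flag_act (M 1) (F 3))) - ln (sigma2_arg (F 2) (F 3) (F 1) (flag_act (M 2) (F 1)))) + 1)
         * exp (ln (sigma1_arg (F 1) (F 2) (F 3) (flag_act (M 1) (F 3))) / 3 - ln (sigma2_arg (F 1) (F 2) (F 3) (flag_act (M 1) (F 3))) / 3
            - ln (sigma1_arg (F 2) (F 3) (F 1) (flag_act (M 2) (F 1))) / 3 + ln (sigma2_arg (F 2) (F 3) (F 1) (flag_act (M 2) (F 1))) / 3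
            - ln (tau111_plus_arg (F 2) (F 3) (F 1)) / 3 - ln (tau111_minus_arg (F 2) (F 3) (flag_act (M 2) (F 1))) / 3)"
      by (rule frame[OF d2 rel fl2 e3(1) e3(3)]) (use P Tm Tp in auto)
    then show ?thesis unfolding unf using 2 Tm Tp n by simp
  next
    case 3
    have Tp: "tau111_plus_arg (F 1) (F 2) (F 3) = tau111_plus_arg (F 3) (F 1) (F 2)"
      using tp_cyc by metis
    have Tm: "tau111_minus_arg (flag_act (M 2) (F 1)) (F 2) (F 3)
        = tau111_minus_arg (F 3) (F 1) (flag_act (M 3) (F 2))"
    proof -
      have "tau111_minus_arg (F 3) (F 1) (flag_act (M 3) (F 2))
          = tau111_minus_arg (F 1) (flag_act (M 3) (F 2)) (F 3)" by (rule tm_cyc)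
      also have "\<dots> = tau111_minus_arg (flag_act (M 2 ** M 1) (F 1)) (flag_act (M 2 ** M 1) (flag_act (M 3) (F 2)))
            (flag_act (M 2 ** M 1) (F 3))"
        using tm_act[OF dets21] by simp
      also have "\<dots> = tau111_minus_arg (lam 1 *\<^sub>R fst (flag_act (M 2) (F 1)), mu 1 *\<^sub>R snd (flag_act (M 2) (F 1)))
          (1 *\<^sub>R fst (F 2), 1 *\<^sub>R snd (F 2)) ((1 / lam 3) *\<^sub>R fst (F 3), (1 / mu 3) *\<^sub>R snd (F 3))"
        unfolding flag_act_def using e1 M21_3[OF e3(1)] M21_3'[OF e3(2)] inv_app[OF r213]
        by (simp add: matrix_vector_mul_assoc[symmetric] matrix_vector_mult_scaleR)
      also have "\<dots> = tau111_minus_arg (flag_act (M 2) (F 1)) (F 2) (F 3)"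
        by (rule tm_scale) (use e1 e3 in auto)
      finally show ?thesis by simp
    qed
    have "lam 3 = exp (ln (sigma1_arg (F 2) (F 3) (F 1) (flag_act (M 2) (F 1))) / 3 + 2/3 * ln (sigma2_arg (F 2) (F 3) (F 1) (flag_act (M 2) (F 1)))
           + 2/3 * ln (sigma1_arg (F 3) (F 1) (F 2) (flag_act (M 3) (F 2))) + ln (sigma2_arg (F 3) (F 1) (F 2) (flag_act (M 3) (F 2))) / 3
           + 2/3 * ln (tau111_plus_arg (F 3) (F 1) (F 2)) + 2/3 * ln (tau111_minus_arg (F 3) (F 1) (flag_act (M 3) (F 2))))
     \<and> mu 3 + nu 3 = (exp (- ln (sigma1_arg (F 2) (F 3) (F 1) (flag_act (M 2) (F 1))) - ln (sigma2_arg (F 3) (F 1) (F 2) (flag_act (M 3) (F 2)))) + 1)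
         * exp (ln (sigma1_arg (F 2) (F 3) (F 1) (flag_act (M 2) (F 1))) / 3 - ln (sigma2_arg (F 2) (F 3) (F 1) (flag_act (M 2) (F 1))) / 3
            - ln (sigma1_arg (F 3) (F 1) (F 2) (flag_act (M 3) (F 2))) / 3 + ln (sigma2_arg (F 3) (F 1) (F 2) (flag_act (M 3) (F 2))) / 3
            - ln (tau111_plus_arg (F 3) (F 1) (F 2)) / 3 - ln (tau111_minus_arg (F 3) (F 1) (flag_act (M 3) (F 2))) / 3)"
      by (rule frame[OF d3 r132 fl3 e1(1) e1(3)]) (use P Tm Tp in auto)
    then show ?thesis unfolding unf using 3 Tm Tp n by simp
  qed
qed


end
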